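(* Let $k\ge 8$ and $H\in\mathcal{H}(k)$. If $C$ is a cycle in $H$ of odd weight that is not spanning (i.e. $V(C)\ne V(H)$), then $|N^1[C]|\ge\frac{2k+1}{3}$.
   Context: For $k\in\mathbb{N}$, $\mathcal{H}(k)$ is the family of graphs $H$ for which (i) there is a weight function $\omega:E(H)\to\{3,4,5\}$ such that $H$ contains no cycle $C$ whose weight $\omega(C)=\sum_{e\in E(C)}\omega(e)$ is odd and smaller than $2k+1$, and (ii) there is a spanning tree $T$ of $H$ all of whose edges have weight $3$. For a vertex set (or subgraph) $B$, $N^1[B]$ is the closed (unweighted) neighbourhood of $V(B)$: all vertices at graph distance at most $1$ from some vertex of $B$. *)

theory Defs
  imports Main "HOL-Library.Library"
begin

definition simple_graph :: "'a set \<Rightarrow> 'a set set \<Rightarrow> bool" where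
  "simple_graph V E \<longleftrightarrow> finite V \<and> (\<forall>e\<in>E. \<exists>u v. e = {u, v} \<and> u \<noteq> v \<and> u \<in> V \<and> v \<in> V)"

definition cycle_edges :: "'a list \<Rightarrow> 'a set set" where
  "cycle_edges cs = {{cs ! i, cs ! ((i + 1) mod length cs)} | i. i < length cs}"

definition is_cycle :: "'a set set \<Rightarrow> 'a list \<Rightarrow> bool" where
  "is_cycle E cs \<longleftrightarrow> length cs \<ge> 3 \<and> distinct cs \<and> cycle_edges cs \<subseteq> E"

definition weight :: "('a set \<Rightarrow> nat) \<Rightarrow> 'a list \<Rightarrow> nat" where
  "weight \<omega> cs = (\<Sum>e\<in>cycle_edges cs. \<omega> e)"

definition edge_rel :: "'a set set \<Rightarrow> ('a \<times> 'a) set" where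
  "edge_rel T = {(u, v). {u, v} \<in> T}"

definition spanning_tree :: "'a set \<Rightarrow> 'a set set \<Rightarrow> 'a set set \<Rightarrow> bool" where
  "spanning_tree V E T \<longleftrightarrow> T \<subseteq> E \<and> (\<forall>u\<in>V. \<forall>v\<in>V. (u, v) \<in> (edge_rel T)\<^sup>*)
     \<and> \<not> (\<exists>cs. is_cycle T cs)"

definition good_weighting :: "nat \<Rightarrow> 'a set \<Rightarrow> 'a set set \<Rightarrow> ('a set \<Rightarrow> nat) \<Rightarrow> bool" where
  "good_weighting k V E \<omega> \<longleftrightarrow>
     (\<forall>e\<in>E. \<omega> e \<in> {3, 4, 5})
   \<and> (\<forall>cs. is_cycle E cs \<longrightarrow> \<not> (odd (weight \<omega> cs) \<and> weight \<omega> cs < 2 * k + 1))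
   \<and> (\<exists>T. spanning_tree V E T \<and> (\<forall>e\<in>T. \<omega> e = 3))"

definition in_Hk :: "nat \<Rightarrow> 'a set \<Rightarrow> 'a set set \<Rightarrow> bool" where
  "in_Hk k V E \<longleftrightarrow> simple_graph V E \<and> (\<exists>\<omega>. good_weighting k V E \<omega>)"

definition N1 :: "'a set set \<Rightarrow> 'a set \<Rightarrow> 'a set" where
  "N1 E S = S \<union> {v. \<exists>u\<in>S. {u, v} \<in> E}"

end

theory Submission
  imports Defs
begin


definition eg :: "'a list \<Rightarrow> nat \<Rightarrow> 'a set" where
  "eg cs i = {cs ! i, cs ! (Suc i mod length cs)}"

lemma cycle_edges_eg: "cycle_edges cs = eg cs ` {..<length cs}"
  unfolding cycle_edges_def eg_def by auto

lemma edge_pos: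
  assumes "distinct cs" "length cs \<ge> 3" "a < length cs" "b < length cs" "m < length cs"
    "{cs!a, cs!b} = eg cs m"
  shows "(a = m \<and> b = Suc m mod length cs) \<or> (b = m \<and> a = Suc m mod length cs)"
proof -
  have "0 < length cs" using assms(2) by linarith
  then have s: "Suc m mod length cs < length cs" by simp
  from assms(6) have "(cs!a = cs!m \<and> cs!b = cs!(Suc m mod length cs)) \<or> (cs!a = cs!(Suc m mod length cs) \<and> cs!b = cs!m)"
    unfolding eg_def by (auto simp: doubleton_eq_iff)
  then show ?thesis using assms s by (auto simp: nth_eq_iff_index_eq)
qed

lemma eg_inj:
  assumes "distinct cs" "length cs \<ge> 3"
  shows "inj_on (eg cs) {..<length cs}"
proof
  fix i k assume i: "i \<in> {..<length cs}" and k: "k \<in> {..<length cs}" and e: "eg cs i = eg cs k"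
  let ?L = "length cs"
  have p: "0 < ?L" using assms(2) by linarith
  have "(i = k \<and> Suc i mod ?L = Suc k mod ?L) \<or> (Suc i mod ?L = k \<and> i = Suc k mod ?L)"
    using edge_pos[OF assms, of i "Suc i mod ?L" k] i k e assms p
    by (simp add: eg_def)
  then show "i = k"
  proof
    assume h: "Suc i mod ?L = k \<and> i = Suc k mod ?L"
    show "i = k"
    proof (cases "Suc k < ?L")
      case True
      then have "i = Suc k" using h by simp
      then have "Suc (Suc k) mod ?L = k" using h by blast
      moreover have "Suc (Suc k) \<le> ?L" using True by simp
      ultimately show ?thesis
      proof (cases "Suc (Suc k) = ?L")
        case True
        then show ?thesis using \<open>Suc (Suc k) mod ?L = k\<close> assms(2) by simp
      next
        case False
        then show ?thesis using \<open>Suc (Suc k) mod ?L = k\<close> \<open>Suc (Suc k) \<le> ?L\<close> by simp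
      qed
    next
      case False
      then have "Suc k = ?L" using k by simp
      then have "i = 0" using h by simp
      then have "Suc 0 mod ?L = k" using h by blast
      then have "k = 1" using assms(2) by simp
      then show ?thesis using \<open>Suc k = ?L\<close> assms(2) by simp
    qed
  qed simp
qed

lemma weight_eq:
  assumes "distinct cs" "length cs \<ge> 3"
  shows "weight w cs = (\<Sum>i<length cs. w (eg cs i))"
  unfolding weight_def cycle_edges_eg using sum.reindex[OF eg_inj[OF assms]] by simp

lemma eg_rotate:
  assumes "i < length cs"
  shows "eg (rotate m cs) i = eg cs ((i + m) mod length cs)"
proof -
  have p: "0 < length cs" using assms by linarith
  have "Suc i mod length cs < length cs" using p by simp
  then have "rotate m cs ! (Suc i mod length cs) = cs ! ((m + Suc i mod length cs) mod length cs)"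
    by (simp add: nth_rotate)
  also have "(m + Suc i mod length cs) mod length cs = Suc ((i + m) mod length cs) mod length cs"
    by (simp add: mod_simps add.commute)
  finally show ?thesis using assms by (simp add: eg_def nth_rotate add.commute)
qed

lemma cycle_edges_rotate: "cycle_edges (rotate m cs) = cycle_edges cs"
proof (cases "cs = []")
  case True then show ?thesis by simp
next
  case False
  let ?L = "length cs"
  have p: "0 < ?L" using False by simp
  show ?thesis
  proof
    show "cycle_edges (rotate m cs) \<subseteq> cycle_edges cs"
      unfolding cycle_edges_eg using p by (auto simp: eg_rotate)
  next
    show "cycle_edges cs \<subseteq> cycle_edges (rotate m cs)"
    proof
      fix e assume "e \<in> cycle_edges cs"
      then obtain j where j: "j < ?L" "e = eg cs j" unfolding cycle_edges_eg by auto
      define i where "i = (j + ?L - m mod ?L) mod ?L"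
      have i: "i < ?L" using p by (simp add: i_def)
      have "(i + m) mod ?L = j"
      proof -
        have "m mod ?L < ?L" using p by simp
        have "(i + m) mod ?L = (j + ?L - m mod ?L + m) mod ?L" by (simp add: i_def mod_simps)
        also have "\<dots> = (j + ?L - m mod ?L + m mod ?L) mod ?L" by (simp add: mod_simps)
        also have "\<dots> = (j + ?L) mod ?L" using \<open>m mod ?L < ?L\<close> by simp
        also have "\<dots> = j" using j by simp
        finally show ?thesis .
      qed
      then have "e = eg (rotate m cs) i" using j i by (simp add: eg_rotate)
      then show "e \<in> cycle_edges (rotate m cs)" unfolding cycle_edges_eg using i by simp
    qed
  qed
qed

lemma is_cycle_rotate: "is_cycle E (rotate m cs) \<longleftrightarrow> is_cycle E cs"
  unfolding is_cycle_def by (simp add: cycle_edges_rotate)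

lemma weight_rotate: "weight w (rotate m cs) = weight w cs"
  unfolding weight_def by (simp add: cycle_edges_rotate)

lemma eg_take_lt:
  assumes "j < length cs" "i < j"
  shows "eg (take (Suc j) cs) i = eg cs i"
  using assms by (simp add: eg_def min_def)

lemma eg_take_last:
  assumes "j < length cs"
  shows "eg (take (Suc j) cs) j = {cs!j, cs!0}"
proof -
  have l: "length (take (Suc j) cs) = Suc j" using assms by simp
  show ?thesis unfolding eg_def l using assms by simp
qed

lemma cycle_edges_take:
  assumes "j < length cs"
  shows "cycle_edges (take (Suc j) cs) = eg cs ` {..<j} \<union> {{cs!j, cs!0}}"
proof -
  have "length (take (Suc j) cs) = Suc j" using assms by simp
  then have "cycle_edges (take (Suc j) cs) = eg (take (Suc j) cs) ` {..<Suc j}"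
    by (simp add: cycle_edges_eg)
  also have "\<dots> = eg (take (Suc j) cs) ` {..<j} \<union> {eg (take (Suc j) cs) j}"
    by (simp add: lessThan_Suc)
  also have "\<dots> = eg cs ` {..<j} \<union> {{cs!j, cs!0}}"
    using assms by (simp add: eg_take_lt eg_take_last)
  finally show ?thesis .
qed

lemma ear_nth:
  assumes "j < length cs"
  shows "i \<le> j \<Longrightarrow> (take (Suc j) cs @ [y]) ! i = cs ! i"
    and "(take (Suc j) cs @ [y]) ! Suc j = y"
  using assms by (auto simp: nth_append min_def)

lemma eg_ear_lt:
  assumes "j < length cs" "i < j"
  shows "eg (take (Suc j) cs @ [y]) i = eg cs i"
  using assms by (simp add: eg_def ear_nth min_def nth_append)

lemma eg_ear_j:
  assumes "j < length cs"
  shows "eg (take (Suc j) cs @ [y]) j = {cs!j, y}"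
  using assms by (simp add: eg_def min_def nth_append)

lemma eg_ear_last:
  assumes "j < length cs"
  shows "eg (take (Suc j) cs @ [y]) (Suc j) = {y, cs!0}"
proof -
  have l: "length (take (Suc j) cs @ [y]) = Suc (Suc j)" using assms by simp
  show ?thesis unfolding eg_def l using assms by (simp add: nth_append)
qed

lemma cycle_edges_ear:
  assumes "j < length cs"
  shows "cycle_edges (take (Suc j) cs @ [y]) = eg cs ` {..<j} \<union> {{cs!j, y}, {y, cs!0}}"
proof -
  have "length (take (Suc j) cs @ [y]) = Suc (Suc j)" using assms by simp
  then have "cycle_edges (take (Suc j) cs @ [y]) = eg (take (Suc j) cs @ [y]) ` {..<Suc (Suc j)}"
    by (simp add: cycle_edges_eg)
  also have "\<dots> = eg (take (Suc j) cs @ [y]) ` {..<j} \<union> {eg (take (Suc j) cs @ [y]) j, eg (take (Suc j) cs @ [y]) (Suc j)}"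
    by (auto simp: lessThan_Suc)
  also have "\<dots> = eg cs ` {..<j} \<union> {{cs!j, y}, {y, cs!0}}"
    using assms by (simp add: eg_ear_lt eg_ear_j eg_ear_last)
  finally show ?thesis .
qed

lemma weight_take:
  assumes "distinct cs" "j < length cs" "2 \<le> j"
  shows "weight w (take (Suc j) cs) = (\<Sum>i<j. w (eg cs i)) + w {cs!j, cs!0}"
proof -
  have d: "distinct (take (Suc j) cs)" using assms by simp
  have l: "length (take (Suc j) cs) = Suc j" using assms by simp
  have "weight w (take (Suc j) cs) = (\<Sum>i<Suc j. w (eg (take (Suc j) cs) i))"
    using weight_eq[OF d] l assms by simp
  also have "\<dots> = (\<Sum>i<j. w (eg (take (Suc j) cs) i)) + w (eg (take (Suc j) cs) j)" by simp
  also have "\<dots> = (\<Sum>i<j. w (eg cs i)) + w {cs!j, cs!0}"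
    using assms by (simp add: eg_take_lt eg_take_last)
  finally show ?thesis .
qed

lemma weight_ear:
  assumes "distinct cs" "j < length cs" "1 \<le> j" "y \<notin> set cs"
  shows "weight w (take (Suc j) cs @ [y]) = (\<Sum>i<j. w (eg cs i)) + w {cs!j, y} + w {y, cs!0}"
proof -
  have "y \<notin> set (take (Suc j) cs)" using assms(4) by (meson in_set_takeD)
  then have d: "distinct (take (Suc j) cs @ [y])" using assms by simp
  have l: "length (take (Suc j) cs @ [y]) = Suc (Suc j)" using assms by simp
  have "weight w (take (Suc j) cs @ [y]) = (\<Sum>i<Suc (Suc j). w (eg (take (Suc j) cs @ [y]) i))"
    using weight_eq[OF d] l assms by simp
  also have "\<dots> = (\<Sum>i<j. w (eg (take (Suc j) cs @ [y]) i)) + w (eg (take (Suc j) cs @ [y]) j) + w (eg (take (Suc j) cs @ [y]) (Suc j))" by simp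
  also have "\<dots> = (\<Sum>i<j. w (eg cs i)) + w {cs!j, y} + w {y, cs!0}"
    using assms by (simp add: eg_ear_lt eg_ear_j eg_ear_last)
  finally show ?thesis .
qed

lemma sum_rot:
  assumes "j \<le> length cs"
  shows "(\<Sum>i<length cs - j. w (eg (rotate j cs) i)) = (\<Sum>i\<in>{j..<length cs}. w (eg cs i))"
proof -
  have "(\<Sum>i<length cs - j. w (eg (rotate j cs) i)) = (\<Sum>i<length cs - j. w (eg cs (i + j)))"
    by (rule sum.cong) (auto simp: eg_rotate)
  also have "\<dots> = (\<Sum>i\<in>{j..<(length cs - j)+j}. w (eg cs i))"
    using sum.shift_bounds_nat_ivl[of "\<lambda>i. w (eg cs i)" 0 j "length cs - j"] by (simp add: atLeast0LessThan)
  also have "\<dots> = (\<Sum>i\<in>{j..<length cs}. w (eg cs i))" using assms by simp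
  finally show ?thesis .
qed

lemma sum_split:
  assumes "j \<le> L"
  shows "(\<Sum>i<j. (f::nat\<Rightarrow>nat) i) + (\<Sum>i\<in>{j..<L}. f i) = (\<Sum>i<L. f i)"
  using assms by (metis atLeast0LessThan le0 sum.atLeastLessThan_concat)

lemma rotate_nth0:
  assumes "j < length cs"
  shows "rotate j cs ! 0 = cs ! j"
proof -
  have "0 < length cs" using assms by linarith
  then have "rotate j cs ! 0 = cs ! ((j + 0) mod length cs)" by (rule nth_rotate)
  then show ?thesis using assms by simp
qed

lemma rotate_nth_back:
  assumes "j < length cs" "0 < j"
  shows "rotate j cs ! (length cs - j) = cs ! 0"
proof -
  have "length cs - j < length cs" using assms by simp
  then have "rotate j cs ! (length cs - j) = cs ! ((j + (length cs - j)) mod length cs)"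
    by (rule nth_rotate)
  also have "(j + (length cs - j)) mod length cs = 0" using assms by simp
  finally show ?thesis .
qed



definition aedges :: "'a set set \<Rightarrow> ('a set \<Rightarrow> nat) \<Rightarrow> 'a set set" where
  "aedges E w = {e \<in> E. w e = 3}"

definition conn :: "'a set set \<Rightarrow> ('a set \<Rightarrow> nat) \<Rightarrow> 'a list \<Rightarrow> 'a set \<Rightarrow> bool" where
  "conn E w cs V \<longleftrightarrow> (\<forall>x\<in>set cs. \<exists>z\<in>V - set cs. (x, z) \<in> (edge_rel (aedges E w))\<^sup>*)"

definition inst :: "'a set \<Rightarrow> 'a set set \<Rightarrow> ('a set \<Rightarrow> nat) \<Rightarrow> bool" where
  "inst V E w \<longleftrightarrow> simple_graph V E \<and> (\<forall>e\<in>E. w e \<in> {3, 4, 5})"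

definition has_short :: "'a set \<Rightarrow> 'a set set \<Rightarrow> ('a set \<Rightarrow> nat) \<Rightarrow> bool" where
  "has_short V E w \<longleftrightarrow> (\<exists>cs. is_cycle E cs \<and> odd (weight w cs) \<and> weight w cs \<le> 3 * card V)"

lemma sg_edge: "simple_graph V E \<Longrightarrow> e \<in> E \<Longrightarrow> \<exists>u v. e = {u, v} \<and> u \<noteq> v \<and> u \<in> V \<and> v \<in> V"
  unfolding simple_graph_def by blast

lemma sg_edge_in:
  assumes "simple_graph V E" "{a, b} \<in> E"
  shows "a \<in> V \<and> b \<in> V \<and> a \<noteq> b"
proof -
  obtain u v where uv: "{a, b} = {u, v}" "u \<noteq> v" "u \<in> V" "v \<in> V"
    using sg_edge[OF assms] by blast
  then have "(a = u \<and> b = v) \<or> (a = v \<and> b = u)" by (simp add: doubleton_eq_iff)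
  then show ?thesis using uv by blast
qed

lemma sg_finite_E: "simple_graph V E \<Longrightarrow> finite E"
proof -
  assume s: "simple_graph V E"
  have "E \<subseteq> Pow V"
  proof
    fix e assume "e \<in> E"
    from sg_edge[OF s this] show "e \<in> Pow V" by auto
  qed
  moreover have "finite V" using s unfolding simple_graph_def by simp
  ultimately show "finite E" by (meson finite_Pow_iff finite_subset)
qed

lemma eg_in_cycle_edges: "i < length cs \<Longrightarrow> eg cs i \<in> cycle_edges cs"
  by (simp add: cycle_edges_eg)

lemma cycle_set_V:
  assumes "simple_graph V E" "is_cycle E cs"
  shows "set cs \<subseteq> V"
proof
  fix x assume "x \<in> set cs"
  then obtain i where i: "i < length cs" "x = cs ! i" by (auto simp: in_set_conv_nth)
  then have e: "eg cs i \<in> E" using assms(2) eg_in_cycle_edges unfolding is_cycle_def by blast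
  then have "{cs ! i, cs ! (Suc i mod length cs)} \<in> E" unfolding eg_def .
  from sg_edge_in[OF assms(1) this] show "x \<in> V" using i(2) by simp
qed

lemma edge_rel_iff: "(a, b) \<in> edge_rel X \<longleftrightarrow> {a, b} \<in> X"
  by (simp add: edge_rel_def)

lemma edge_rel_sym: "(a, b) \<in> edge_rel X \<Longrightarrow> (b, a) \<in> edge_rel X"
proof -
  have "{b, a} = {a, b}" by blast
  then show "(a, b) \<in> edge_rel X \<Longrightarrow> (b, a) \<in> edge_rel X" unfolding edge_rel_iff by simp
qed

lemma edge_rel_mono: "X \<subseteq> Y \<Longrightarrow> (edge_rel X)\<^sup>* \<subseteq> (edge_rel Y)\<^sup>*"
proof (rule rtrancl_mono)
  assume "X \<subseteq> Y"
  show "edge_rel X \<subseteq> edge_rel Y"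
  proof (rule subrelI)
    fix a b assume "(a, b) \<in> edge_rel X"
    then show "(a, b) \<in> edge_rel Y" using \<open>X \<subseteq> Y\<close> unfolding edge_rel_iff by blast
  qed
qed

lemma sym_edge_rel: "sym (edge_rel X)"
  by (rule symI) (rule edge_rel_sym)

lemma reroute:
  assumes "e = {u, v}" "(u, v) \<in> (edge_rel (X - {e}))\<^sup>*"
  shows "(edge_rel X)\<^sup>* \<subseteq> (edge_rel (X - {e}))\<^sup>*"
proof (rule rtrancl_subset_rtrancl)
  have "sym ((edge_rel (X - {e}))\<^sup>*)" by (rule sym_rtrancl[OF sym_edge_rel])
  then have vu: "(v, u) \<in> (edge_rel (X - {e}))\<^sup>*" using assms(2) by (rule symD)
  show "edge_rel X \<subseteq> (edge_rel (X - {e}))\<^sup>*"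
  proof
    fix p assume "p \<in> edge_rel X"
    then obtain a b where p: "p = (a, b)" "{a, b} \<in> X" unfolding edge_rel_def by auto
    show "p \<in> (edge_rel (X - {e}))\<^sup>*"
    proof (cases "{a, b} = e")
      case True
      then have "(a = u \<and> b = v) \<or> (a = v \<and> b = u)" using assms(1) by (auto simp: doubleton_eq_iff)
      then show ?thesis using p assms(2) vu by blast
    next
      case False
      then have "(a, b) \<in> edge_rel (X - {e})" using p unfolding edge_rel_def by simp
      then show ?thesis using p by blast
    qed
  qed
qed

lemma conn_rotate: "conn E w (rotate m cs) V = conn E w cs V"
  unfolding conn_def by simp

lemma cycle_len: "is_cycle E cs \<Longrightarrow> length cs \<ge> 3 \<and> distinct cs"
  unfolding is_cycle_def by simp

lemma cycle_eg_E: "is_cycle E cs \<Longrightarrow> i < length cs \<Longrightarrow> eg cs i \<in> E"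
  unfolding is_cycle_def using eg_in_cycle_edges by blast



lemma is_cycle_mono: "is_cycle E' cs \<Longrightarrow> E' \<subseteq> E \<Longrightarrow> is_cycle E cs"
  unfolding is_cycle_def by blast

lemma simple_graph_mono: "simple_graph V E \<Longrightarrow> E' \<subseteq> E \<Longrightarrow> simple_graph V E'"
  unfolding simple_graph_def by blast

lemma inst_mono: "inst V E w \<Longrightarrow> E' \<subseteq> E \<Longrightarrow> inst V E' w"
  unfolding inst_def using simple_graph_mono by blast

lemma aedges_sub: "aedges E w \<subseteq> E"
  unfolding aedges_def by blast

lemma aedges_iff: "e \<in> aedges E w \<longleftrightarrow> e \<in> E \<and> w e = 3"
  unfolding aedges_def by simp

lemma odd_split:
  fixes x y z k :: nat
  assumes "x + y = z + 2 * k" "odd z"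
  shows "odd x \<or> odd y"
proof (rule ccontr)
  assume "\<not> (odd x \<or> odd y)"
  then have "even (x + y)" by simp
  then have "even (z + 2 * k)" using assms(1) by simp
  then show False using assms(2) by simp
qed

lemma two_edges:
  assumes cyc: "is_cycle E cs" and p: "p < length cs"
  shows "\<exists>e1 e2. e1 \<in> cycle_edges cs \<and> e2 \<in> cycle_edges cs \<and> cs!p \<in> e1 \<and> cs!p \<in> e2 \<and> e1 \<noteq> e2"
proof -
  define L where "L = length cs"
  have dist: "distinct cs" and L3: "3 \<le> L" using cycle_len[OF cyc] L_def by auto
  define q where "q = (p + L - 1) mod L"
  have qL: "q < L" unfolding q_def using L3 by simp
  have sq: "Suc q mod L = p"
  proof -
    have "Suc q mod L = Suc (p + L - 1) mod L" unfolding q_def by (simp add: mod_Suc_eq)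
    also have "Suc (p + L - 1) = p + L" using L3 by simp
    also have "(p + L) mod L = p" using p L_def by simp
    finally show ?thesis .
  qed
  have qp: "q \<noteq> p"
  proof
    assume "q = p"
    then have "Suc p mod L = p" using sq by simp
    moreover have "Suc p mod L \<noteq> p"
    proof (cases "Suc p < L")
      case True then show ?thesis by simp
    next
      case False
      then have "Suc p = L" using p L_def by simp
      then show ?thesis using L3 by simp
    qed
    ultimately show False by simp
  qed
  have "eg cs p \<noteq> eg cs q"
  proof
    assume "eg cs p = eg cs q"
    then have "p = q" using eg_inj[OF dist] L3 L_def p qL by (meson inj_onD lessThan_iff)
    then show False using qp by simp
  qed
  moreover have "cs!p \<in> eg cs p" unfolding eg_def by simp
  moreover have "cs!p \<in> eg cs q" unfolding eg_def using sq L_def by simp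
  moreover have "eg cs p \<in> cycle_edges cs" by (rule eg_in_cycle_edges[OF p])
  moreover have "eg cs q \<in> cycle_edges cs" using qL L_def by (simp add: eg_in_cycle_edges)
  ultimately show ?thesis by blast
qed

lemma eg_sub_set: "i < length cs \<Longrightarrow> eg cs i \<subseteq> set cs"
proof -
  assume i: "i < length cs"
  then have "0 < length cs" by linarith
  then have "Suc i mod length cs < length cs" by simp
  then show "eg cs i \<subseteq> set cs" unfolding eg_def using i by simp
qed

lemma cycle_edges_sub_set: "e \<in> cycle_edges cs \<Longrightarrow> e \<subseteq> set cs"
  unfolding cycle_edges_eg using eg_sub_set by blast

locale mc =
  fixes V :: "'a set" and E :: "'a set set" and w :: "'a set \<Rightarrow> nat"
  assumes inst: "inst V E w"
    and IH: "\<And>(V'::'a set) E' w' cs'. card V' + card E' < card V + card E \<Longrightarrow> inst V' E' w' \<Longrightarrow>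
               is_cycle E' cs' \<Longrightarrow> odd (weight w' cs') \<Longrightarrow> conn E' w' cs' V' \<Longrightarrow> has_short V' E' w'"
    and noshort: "\<not> has_short V E w"
begin

lemma sg: "simple_graph V E" using inst unfolding inst_def by simp

lemma wts: "e \<in> E \<Longrightarrow> w e \<in> {3, 4, 5}" using inst unfolding inst_def by simp

lemma finV: "finite V" using sg unfolding simple_graph_def by simp

lemma finE: "finite E" using sg_finite_E[OF sg] .

lemma short_sub:
  assumes "E' \<subseteq> E" "card V' \<le> card V" "has_short V' E' w"
  shows False
proof -
  obtain cs where cs: "is_cycle E' cs" "odd (weight w cs)" "weight w cs \<le> 3 * card V'"
    using assms(3) unfolding has_short_def by blast
  have "is_cycle E cs" using is_cycle_mono[OF cs(1) assms(1)] .
  moreover have "weight w cs \<le> 3 * card V" using cs(3) assms(2) by linarith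
  ultimately have "has_short V E w" using cs(2) unfolding has_short_def by blast
  then show False using noshort by simp
qed

lemma chord_odd:
  assumes cyc: "is_cycle E cs" and cn: "conn E w cs V"
    and j: "2 \<le> j" "j + 2 \<le> length cs"
    and f: "{cs!j, cs!0} \<in> aedges E w" and nf: "{cs!j, cs!0} \<notin> cycle_edges cs"
    and od: "odd (weight w (take (Suc j) cs))"
  shows False
proof -
  define L where "L = length cs"
  define D where "D = take (Suc j) cs"
  define f' where "f' = {cs!j, cs!0}"
  have dist: "distinct cs" and L3: "3 \<le> L" using cycle_len[OF cyc] L_def by auto
  have jL: "j < L" using j L_def by simp
  have fE: "f' \<in> E" "w f' = 3" using f f'_def unfolding aedges_iff by auto
  have ceD: "cycle_edges D = eg cs ` {..<j} \<union> {f'}"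
    using cycle_edges_take[of j cs] jL L_def D_def f'_def by simp
  have lenD: "length D = Suc j" using jL L_def D_def by simp
  have distD: "distinct D" using dist D_def by simp
  have inj: "inj_on (eg cs) {..<L}" using eg_inj[OF dist] L3 L_def by simp
  have Dcyc_gen: "is_cycle E' D" if h1: "\<And>i. i < j \<Longrightarrow> eg cs i \<in> E'" and h2: "f' \<in> E'" for E'
  proof -
    have "cycle_edges D \<subseteq> E'" using h1 h2 ceD by auto
    then show ?thesis unfolding is_cycle_def using lenD distD j by simp
  qed
  have setD: "set D \<subseteq> set cs" unfolding D_def by (rule set_take_subset)
  have notin: "eg cs i \<noteq> eg cs i'" if "j \<le> i" "i < L" "i' < j" for i i'
  proof
    assume "eg cs i = eg cs i'"
    then have "i = i'" using inj that jL by (meson inj_onD lessThan_iff order_less_trans)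
    then show False using that by simp
  qed
  have notf: "eg cs i \<noteq> f'" if "i < L" for i
    using nf f'_def eg_in_cycle_edges[of i cs] that L_def by auto
  have final: False if s: "E' \<subseteq> E" and c: "card E' < card E" and dc: "is_cycle E' D"
      and rc: "(edge_rel (aedges E w))\<^sup>* \<subseteq> (edge_rel (aedges E' w))\<^sup>*" for E'
  proof -
    have cnD: "conn E' w D V" unfolding conn_def
    proof
      fix x assume "x \<in> set D"
      then have "x \<in> set cs" using setD by blast
      then obtain z where z: "z \<in> V - set cs" "(x, z) \<in> (edge_rel (aedges E w))\<^sup>*"
        using cn unfolding conn_def by blast
      have "z \<in> V - set D" using z(1) setD by blast
      moreover have "(x, z) \<in> (edge_rel (aedges E' w))\<^sup>*" using z(2) rc by blast
      ultimately show "\<exists>z\<in>V - set D. (x, z) \<in> (edge_rel (aedges E' w))\<^sup>*" by blast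
    qed
    have c1: "card V + card E' < card V + card E" using c by simp
    have c2: "inst V E' w" using inst_mono[OF inst s] .
    have c3: "odd (weight w D)" using od D_def by simp
    have hs: "has_short V E' w" by (rule IH[OF c1 c2 dc c3 cnD])
    show False by (rule short_sub[OF s le_refl hs])
  qed
  show False
  proof (cases "\<exists>i. j \<le> i \<and> i < L \<and> w (eg cs i) \<noteq> 3")
    case True
    then obtain i where i: "j \<le> i" "i < L" "w (eg cs i) \<noteq> 3" by blast
    define E' where "E' = E - {eg cs i}"
    have eiE: "eg cs i \<in> E" using cycle_eg_E[OF cyc] i L_def by simp
    have ae: "aedges E' w = aedges E w" using i(3) unfolding E'_def aedges_def by auto
    have dc: "is_cycle E' D"
    proof (rule Dcyc_gen)
      fix i' assume "i' < j"
      then have "eg cs i' \<in> E" using cycle_eg_E[OF cyc] jL L_def by simp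
      moreover have "eg cs i' \<noteq> eg cs i" using notin[OF i(1) i(2) \<open>i' < j\<close>] by simp
      ultimately show "eg cs i' \<in> E'" unfolding E'_def by simp
    next
      show "f' \<in> E'" using fE notf[OF i(2)] unfolding E'_def by simp
    qed
    have cE: "card E' < card E" unfolding E'_def by (rule card_Diff1_less[OF finE eiE])
    have sE: "E' \<subseteq> E" unfolding E'_def by blast
    have rc: "(edge_rel (aedges E w))\<^sup>* \<subseteq> (edge_rel (aedges E' w))\<^sup>*" using ae by simp
    show False by (rule final[OF sE cE dc rc])
  next
    case False
    then have all3: "w (eg cs i) = 3" if "j \<le> i" "i < L" for i using that by blast
    define e where "e = eg cs j"
    define E' where "E' = E - {e}"
    define R where "R = edge_rel (aedges E w - {e})"
    have sjL: "Suc j < L" using j L_def by simp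
    have e2: "e = {cs!(Suc j), cs!j}" unfolding e_def eg_def using sjL L_def by (simp add: insert_commute)
    have eE: "e \<in> E" using cycle_eg_E[OF cyc] jL L_def e_def by simp
    have aE': "aedges E' w = aedges E w - {e}" unfolding E'_def aedges_def by auto
    have stepR: "(cs!i, cs!(Suc i mod L)) \<in> R" if "j < i" "i < L" for i
    proof -
      have "eg cs i \<in> aedges E w" unfolding aedges_iff using cycle_eg_E[OF cyc] that all3 L_def by simp
      moreover have "eg cs i \<noteq> e" unfolding e_def
      proof
        assume "eg cs i = eg cs j"
        then have "i = j" using inj that jL by (meson inj_onD lessThan_iff)
        then show False using that by simp
      qed
      ultimately have "eg cs i \<in> aedges E w - {e}" by simp
      then show ?thesis unfolding R_def edge_rel_iff eg_def L_def .
    qed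
    have down: "\<forall>i. L - 1 - i = k \<longrightarrow> Suc j \<le> i \<longrightarrow> i < L \<longrightarrow> (cs!i, cs!0) \<in> R\<^sup>*" for k
    proof (induction k)
      case 0
      show ?case
      proof (intro allI impI)
        fix i assume h: "L - 1 - i = 0" "Suc j \<le> i" "i < L"
        then have iL: "i = L - 1" by simp
        then have "Suc i mod L = 0" using L3 by simp
        then have "(cs!i, cs!0) \<in> R" using stepR[of i] h by simp
        then show "(cs!i, cs!0) \<in> R\<^sup>*" by simp
      qed
    next
      case (Suc k)
      show ?case
      proof (intro allI impI)
        fix i assume h: "L - 1 - i = Suc k" "Suc j \<le> i" "i < L"
        then have "Suc i < L" by simp
        then have "Suc i mod L = Suc i" by simp
        then have s1: "(cs!i, cs!(Suc i)) \<in> R" using stepR[of i] h by simp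
        have "L - 1 - Suc i = k" using h by simp
        then have "(cs!(Suc i), cs!0) \<in> R\<^sup>*" using Suc.IH h \<open>Suc i < L\<close> by simp
        then show "(cs!i, cs!0) \<in> R\<^sup>*" by (rule converse_rtrancl_into_rtrancl[OF s1])
      qed
    qed
    have p1: "(cs!(Suc j), cs!0) \<in> R\<^sup>*" using down[of "L - 1 - Suc j"] sjL by simp
    have "f' \<in> aedges E w - {e}" using f f'_def notf[OF jL] e_def by simp
    then have "(cs!j, cs!0) \<in> R" unfolding R_def edge_rel_iff f'_def .
    then have "(cs!0, cs!j) \<in> R" unfolding R_def by (rule edge_rel_sym)
    then have path: "(cs!(Suc j), cs!j) \<in> R\<^sup>*" using p1 by simp
    have rc: "(edge_rel (aedges E w))\<^sup>* \<subseteq> (edge_rel (aedges E' w))\<^sup>*"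
      using reroute[OF e2, of "aedges E w"] path unfolding R_def aE' by simp
    have dc: "is_cycle E' D"
    proof (rule Dcyc_gen)
      fix i' assume "i' < j"
      then have "eg cs i' \<in> E" using cycle_eg_E[OF cyc] jL L_def by simp
      moreover have "eg cs i' \<noteq> e" using notin[OF _ jL \<open>i' < j\<close>] e_def by simp
      ultimately show "eg cs i' \<in> E'" unfolding E'_def by simp
    next
      show "f' \<in> E'" using fE notf[OF jL] e_def unfolding E'_def by simp
    qed
    have cE: "card E' < card E" unfolding E'_def by (rule card_Diff1_less[OF finE eE])
    have sE: "E' \<subseteq> E" unfolding E'_def by blast
    show False by (rule final[OF sE cE dc rc])
  qed
qed


lemma weight_sum:
  assumes cyc: "is_cycle E' cs"
  shows "weight w' cs = (\<Sum>i<length cs. w' (eg cs i))"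
  using weight_eq cycle_len[OF cyc] by blast

lemma chord_case:
  assumes cyc: "is_cycle E cs" and od: "odd (weight w cs)" and cn: "conn E w cs V"
    and j: "2 \<le> j" "j + 2 \<le> length cs"
    and f: "{cs!j, cs!0} \<in> aedges E w" and nf: "{cs!j, cs!0} \<notin> cycle_edges cs"
  shows False
proof -
  define L where "L = length cs"
  define rot where "rot = rotate j cs"
  have dist: "distinct cs" and L3: "3 \<le> L" using cycle_len[OF cyc] L_def by auto
  have jL: "j < L" using j L_def by simp
  have w3: "w {cs!j, cs!0} = 3" using f unfolding aedges_iff by simp
  have comm: "{cs!0, cs!j} = {cs!j, cs!0}" by (simp add: insert_commute)
  have wD1: "weight w (take (Suc j) cs) = (\<Sum>i<j. w (eg cs i)) + 3"
    using weight_take[OF dist, of j w] jL j L_def w3 by simp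
  have rl: "length rot = L" unfolding rot_def L_def by simp
  have j2: "2 \<le> L - j" "L - j < L" using j L_def by auto
  have distr: "distinct rot" unfolding rot_def using dist by simp
  have r0: "rot ! 0 = cs ! j" unfolding rot_def using rotate_nth0 jL L_def by simp
  have jpos: "0 < j" using j by simp
  have rb: "rot ! (L - j) = cs ! 0" unfolding rot_def L_def using rotate_nth_back[OF _ jpos] jL L_def by simp
  have wD2a: "weight w (take (Suc (L - j)) rot) = (\<Sum>i<L - j. w (eg rot i)) + w {rot!(L-j), rot!0}"
    using weight_take[OF distr, of "L - j" w] j2 rl by simp
  have wD2: "weight w (take (Suc (L - j)) rot) = (\<Sum>i\<in>{j..<L}. w (eg cs i)) + 3"
    using wD2a rb r0 comm w3 sum_rot[of j cs w] jL L_def unfolding rot_def by simp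
  have wc: "weight w cs = (\<Sum>i<j. w (eg cs i)) + (\<Sum>i\<in>{j..<L}. w (eg cs i))"
    using weight_sum[OF cyc] sum_split[of j L "\<lambda>i. w (eg cs i)"] jL L_def by simp
  have "weight w (take (Suc j) cs) + weight w (take (Suc (L - j)) rot) = weight w cs + 2 * 3"
    using wD1 wD2 wc by simp
  then have "odd (weight w (take (Suc j) cs)) \<or> odd (weight w (take (Suc (L - j)) rot))"
    using od by (rule odd_split)
  then show False
  proof
    assume "odd (weight w (take (Suc j) cs))"
    then show False using chord_odd[OF cyc cn j f nf] by simp
  next
    assume o2: "odd (weight w (take (Suc (L - j)) rot))"
    have cr: "is_cycle E rot" unfolding rot_def using cyc by (simp add: is_cycle_rotate)
    have cnr: "conn E w rot V" unfolding rot_def using cn by (simp add: conn_rotate)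
    have j2': "2 \<le> L - j" "L - j + 2 \<le> length rot" using j2 rl j by auto
    have fr: "{rot!(L-j), rot!0} \<in> aedges E w" using f rb r0 comm by simp
    have nfr: "{rot!(L-j), rot!0} \<notin> cycle_edges rot"
      using nf rb r0 comm unfolding rot_def by (simp add: cycle_edges_rotate)
    show False using chord_odd[OF cr cnr j2' fr nfr] o2 by simp
  qed
qed

lemma rot_pos:
  assumes "p < L" "q < L" "L = length cs"
  shows "rotate p cs ! ((q + L - p) mod L) = cs ! q"
proof -
  have L0: "0 < L" using assms(1) by linarith
  have "(q + L - p) mod L < length cs" using L0 assms by simp
  then have "rotate p cs ! ((q + L - p) mod L) = cs ! ((p + (q + L - p) mod L) mod L)"
    using nth_rotate assms(3) by metis
  also have "(p + (q + L - p) mod L) mod L = (p + (q + L - p)) mod L" by (simp add: mod_add_right_eq)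
  also have "p + (q + L - p) = q + L" using assms by simp
  also have "(q + L) mod L = q" using assms by simp
  finally show ?thesis .
qed

lemma nochord:
  assumes cyc: "is_cycle E cs" and od: "odd (weight w cs)" and cn: "conn E w cs V"
    and ab: "a \<in> set cs" "b \<in> set cs" "{a, b} \<in> aedges E w"
  shows "{a, b} \<in> cycle_edges cs"
proof (rule ccontr)
  assume nc: "{a, b} \<notin> cycle_edges cs"
  define L where "L = length cs"
  have dist: "distinct cs" and L3: "3 \<le> L" using cycle_len[OF cyc] L_def by auto
  obtain p where p: "p < L" "a = cs ! p" using ab(1) L_def by (auto simp: in_set_conv_nth)
  obtain q where q: "q < L" "b = cs ! q" using ab(2) L_def by (auto simp: in_set_conv_nth)
  have "{a, b} \<in> E" using ab(3) unfolding aedges_iff by simp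
  then have ab_ne: "a \<noteq> b" using sg_edge_in[OF sg] by blast
  define rot where "rot = rotate p cs"
  define j where "j = (q + L - p) mod L"
  have rl: "length rot = L" unfolding rot_def L_def by simp
  have jL: "j < L" unfolding j_def using L3 by simp
  have r0: "rot ! 0 = a" unfolding rot_def using rotate_nth0 p L_def by simp
  have rj: "rot ! j = b" unfolding rot_def j_def using rot_pos[OF p(1) q(1) L_def] q by simp
  have cer: "cycle_edges rot = cycle_edges cs" unfolding rot_def by (rule cycle_edges_rotate)
  have j0: "j \<noteq> 0"
  proof
    assume "j = 0"
    then show False using r0 rj ab_ne by simp
  qed
  have j1: "j \<noteq> 1"
  proof
    assume "j = 1"
    then have "eg rot 0 = {a, b}" unfolding eg_def using r0 rj rl L3 by simp
    then show False using nc eg_in_cycle_edges[of 0 rot] cer rl L3 by simp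
  qed
  have jl: "j \<noteq> L - 1"
  proof
    assume h: "j = L - 1"
    then have "Suc (L - 1) mod L = 0" using L3 by simp
    then have "eg rot (L - 1) = {b, a}" unfolding eg_def using r0 rj rl h by simp
    then have "{b, a} \<in> cycle_edges cs" using eg_in_cycle_edges[of "L - 1" rot] cer rl L3 by simp
    then show False using nc by (simp add: insert_commute)
  qed
  have j2: "2 \<le> j" "j + 2 \<le> length rot" using j0 j1 jl jL rl by auto
  have cr: "is_cycle E rot" unfolding rot_def using cyc by (simp add: is_cycle_rotate)
  have odr: "odd (weight w rot)" unfolding rot_def using od by (simp add: weight_rotate)
  have cnr: "conn E w rot V" unfolding rot_def using cn by (simp add: conn_rotate)
  have fr: "{rot!j, rot!0} \<in> aedges E w" using ab(3) r0 rj by (simp add: insert_commute)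
  have nfr: "{rot!j, rot!0} \<notin> cycle_edges rot" using nc r0 rj cer by (simp add: insert_commute)
  show False by (rule chord_case[OF cr odr cnr j2 fr nfr])
qed

end



lemma take_mem:
  assumes "k \<le> j" "j < length cs"
  shows "cs ! k \<in> set (take (Suc j) cs)"
proof -
  have "take (Suc j) cs ! k = cs ! k" using assms by simp
  moreover have "k < length (take (Suc j) cs)" using assms by simp
  ultimately show ?thesis by (metis nth_mem)
qed

lemma ear_pos:
  assumes dist: "distinct cs" and L3: "3 \<le> length cs" and jL: "Suc j < length cs"
    and v: "v \<in> set (take (Suc j) cs)" and v': "v' \<in> set (drop (Suc j) cs)"
    and e: "{v, v'} \<in> cycle_edges cs"
  shows "v = cs ! 0 \<or> v = cs ! j"
proof -
  define L where "L = length cs"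
  obtain a where a: "a < Suc j" "v = cs ! a" using v jL by (auto simp: in_set_conv_nth)
  obtain t where t: "t < length (drop (Suc j) cs)" "v' = drop (Suc j) cs ! t"
    using v' by (auto simp: in_set_conv_nth)
  define b where "b = Suc j + t"
  have bL: "b < L" using t L_def b_def by simp
  have vb: "v' = cs ! b" using t b_def jL by simp
  have aL: "a < L" using a jL L_def by simp
  obtain m where m: "m < L" "eg cs m = {v, v'}" using e L_def unfolding cycle_edges_eg by auto
  have "(a = m \<and> b = Suc m mod L) \<or> (b = m \<and> a = Suc m mod L)"
    using edge_pos[OF dist L3 aL[unfolded L_def] bL[unfolded L_def] m(1)[unfolded L_def]] m(2) a(2) vb L_def by simp
  then show ?thesis
  proof
    assume h: "a = m \<and> b = Suc m mod L"
    show ?thesis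
    proof (cases "Suc m < L")
      case True
      then have "b = Suc a" using h by simp
      then have "a = j" using a b_def by simp
      then show ?thesis using a by simp
    next
      case False
      then have "Suc m = L" using m(1) by simp
      then have "b = 0" using h by simp
      then show ?thesis using b_def by simp
    qed
  next
    assume h: "b = m \<and> a = Suc m mod L"
    show ?thesis
    proof (cases "Suc m < L")
      case True
      then have "a = Suc b" using h by simp
      then show ?thesis using a b_def by simp
    next
      case False
      then have "Suc m = L" using m(1) by simp
      then have "a = 0" using h by simp
      then show ?thesis using a by simp
    qed
  qed
qed

context mc begin

lemma ear_odd:
  assumes cyc: "is_cycle E cs" and cn: "conn E w cs V"
    and NC: "\<And>a b. a \<in> set cs \<Longrightarrow> b \<in> set cs \<Longrightarrow> {a, b} \<in> aedges E w \<Longrightarrow> {a, b} \<in> cycle_edges cs"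
    and j: "1 \<le> j" "j + 2 \<le> length cs"
    and y: "y \<in> V" "y \<notin> set cs"
    and e0: "{cs!0, y} \<in> aedges E w" and ej: "{cs!j, y} \<in> aedges E w"
    and od: "odd (weight w (take (Suc j) cs @ [y]))"
  shows False
proof -
  define L where "L = length cs"
  have dist: "distinct cs" and L3: "3 \<le> L" using cycle_len[OF cyc] L_def by auto
  have jL: "j < L" and sjL: "Suc j < L" using j L_def by auto
  define D where "D = take (Suc j) cs @ [y]"
  define P where "P = take (Suc j) cs"
  define I where "I = set (drop (Suc j) cs)"
  define c where "c = cs ! Suc j"
  have csV: "set cs \<subseteq> V" using cycle_set_V[OF sg cyc] .
  have cI: "c \<in> I"
  proof -
    have "drop (Suc j) cs ! 0 = c" unfolding c_def using sjL L_def by simp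
    moreover have "0 < length (drop (Suc j) cs)" using sjL L_def by simp
    ultimately show ?thesis unfolding I_def by (metis nth_mem)
  qed
  have PI: "set P \<inter> I = {}" unfolding P_def I_def using dist
    by (rule set_take_disj_set_drop_if_distinct) simp
  have csPI: "set cs = set P \<union> I" unfolding P_def I_def by (metis append_take_drop_id set_append)
  have yI: "y \<notin> I" "y \<notin> set P" using y(2) csPI by auto
  have cP: "c \<notin> set P" using cI PI by blast
  have cy: "c \<noteq> y" using cI yI by blast
  have setD: "set D = insert y (set P)" unfolding D_def P_def by simp
  have cD: "c \<notin> set D" using setD cP cy by simp
  define V' where "V' = V - (I - {c})"
  define E'' where "E'' = {e \<in> E. e \<inter> I = {}}"
  define E' where "E' = insert {c, y} E''"
  define w' where "w' = w({c, y} := 3)"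
  have cV: "c \<in> V" using csV cI csPI by blast
  have E''E: "E'' \<subseteq> E" unfolding E''_def by blast
  have nc_E'': "c \<notin> e" if "e \<in> E''" for e using that cI unfolding E''_def by blast
  have ww': "w' e = w e" if "e \<noteq> {c, y}" for e using that unfolding w'_def by simp
  have inst': "inst V' E' w'"
    unfolding inst_def simple_graph_def
  proof (intro conjI ballI)
    show "finite V'" unfolding V'_def using finV by simp
  next
    fix e assume "e \<in> E'"
    then show "\<exists>u v. e = {u, v} \<and> u \<noteq> v \<and> u \<in> V' \<and> v \<in> V'"
    proof (cases "e = {c, y}")
      case True
      have "c \<in> V'" unfolding V'_def using cV by simp
      moreover have "y \<in> V'" unfolding V'_def using y(1) yI by simp
      ultimately show ?thesis using True cy by blast
    next
      case False
      then have eE: "e \<in> E''" using \<open>e \<in> E'\<close> unfolding E'_def by simp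
      then obtain u v where uv: "e = {u, v}" "u \<noteq> v" "u \<in> V" "v \<in> V"
        using sg_edge[OF sg] E''E by blast
      have "u \<notin> I" "v \<notin> I" using eE uv(1) unfolding E''_def by auto
      then have "u \<in> V'" "v \<in> V'" unfolding V'_def using uv by auto
      then show ?thesis using uv by blast
    qed
  next
    fix e assume "e \<in> E'"
    show "w' e \<in> {3, 4, 5}"
    proof (cases "e = {c, y}")
      case True then show ?thesis unfolding w'_def by simp
    next
      case False
      then have "e \<in> E" using \<open>e \<in> E'\<close> E''E unfolding E'_def by auto
      then show ?thesis using wts ww'[OF False] by simp
    qed
  qed
  have sizes: "card V' + card E' < card V + card E"
  proof -
    have "card V' \<le> card V" unfolding V'_def using finV by (simp add: card_mono)
    define e1 where "e1 = eg cs j"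
    define e2 where "e2 = eg cs (L - 1)"
    have e1E: "e1 \<in> E" unfolding e1_def using cycle_eg_E[OF cyc] jL L_def by simp
    have e2E: "e2 \<in> E" unfolding e2_def using cycle_eg_E[OF cyc] L3 L_def by simp
    have e1c: "c \<in> e1" unfolding e1_def eg_def c_def using sjL L_def by simp
    have le: "Suc j \<le> L - 1" using j L_def by simp
    have tl: "L - 1 - Suc j < length (drop (Suc j) cs)" using le L_def L3 by simp
    have "drop (Suc j) cs ! (L - 1 - Suc j) = cs ! (Suc j + (L - 1 - Suc j))"
      using sjL L_def by (simp add: nth_drop)
    also have "Suc j + (L - 1 - Suc j) = L - 1" using le by simp
    finally have "drop (Suc j) cs ! (L - 1 - Suc j) = cs ! (L - 1)" .
    then have "cs ! (L - 1) \<in> I" unfolding I_def using nth_mem[OF tl] by simp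
    then have e2I: "e2 \<inter> I \<noteq> {}" unfolding e2_def eg_def by blast
    have e12: "e1 \<noteq> e2"
    proof
      assume "e1 = e2"
      then have "eg cs j = eg cs (L - 1)" unfolding e1_def e2_def .
      moreover have "j \<in> {..<length cs}" "L - 1 \<in> {..<length cs}" using jL L3 L_def by auto
      ultimately have "j = L - 1" using eg_inj[OF dist] L3 L_def by (simp add: inj_on_eq_iff)
      then show False using j L_def by simp
    qed
    have "E'' \<subseteq> E - {e1, e2}" unfolding E''_def using e1c cI e2I by blast
    then have "card E'' \<le> card (E - {e1, e2})" using finE by (simp add: card_mono)
    also have "card (E - {e1, e2}) = card E - 2" using e1E e2E e12 finE by (simp add: card_Diff_subset)
    finally have cE'': "card E'' \<le> card E - 2" .
    have "card E' \<le> Suc (card E'')" unfolding E'_def by (rule card_insert_le_m1) simp_all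
    moreover have "card E \<ge> 2"
    proof -
      have "{e1, e2} \<subseteq> E" using e1E e2E by simp
      then have "card {e1, e2} \<le> card E" using finE by (rule card_mono[rotated])
      then show ?thesis using e12 by simp
    qed
    ultimately have "card E' < card E" using cE'' by linarith
    then show ?thesis using \<open>card V' \<le> card V\<close> by linarith
  qed
  have ceD: "cycle_edges D = eg cs ` {..<j} \<union> {{cs!j, y}, {y, cs!0}}"
    unfolding D_def using cycle_edges_ear[OF jL[unfolded L_def]] .
  have P_sub: "eg cs i \<subseteq> set P" if "i < j" for i
  proof -
    have "Suc i mod L = Suc i" using that jL by simp
    then have "eg cs i = {cs ! i, cs ! Suc i}" unfolding eg_def L_def by simp
    moreover have "cs ! i \<in> set P" "cs ! Suc i \<in> set P"
      unfolding P_def using that jL L_def take_mem[of i j cs] take_mem[of "Suc i" j cs] by auto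
    ultimately show ?thesis by simp
  qed
  have c0P: "cs ! 0 \<in> set P" "cs ! j \<in> set P" unfolding P_def using jL L_def take_mem[of 0 j cs] take_mem[of j j cs] by auto
  have e0E: "{cs!0, y} \<in> E" and ejE: "{cs!j, y} \<in> E" using e0 ej unfolding aedges_iff by auto
  have ceD_E'': "cycle_edges D \<subseteq> E''"
  proof
    fix e assume "e \<in> cycle_edges D"
    then consider (a) i where "i < j" "e = eg cs i" | (b) "e = {cs!j, y}" | (c) "e = {y, cs!0}"
      using ceD by auto
    then show "e \<in> E''"
    proof cases
      case a
      then have "e \<in> E" using cycle_eg_E[OF cyc] jL L_def by simp
      moreover have "e \<inter> I = {}" using P_sub[OF a(1)] a(2) PI by blast
      ultimately show ?thesis unfolding E''_def by simp
    next
      case b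
      then show ?thesis unfolding E''_def using ejE c0P PI yI by auto
    next
      case c
      have "{y, cs!0} = {cs!0, y}" by (simp add: insert_commute)
      then show ?thesis unfolding E''_def using c e0E c0P PI yI by auto
    qed
  qed
  have lenD: "length D = Suc (Suc j)" unfolding D_def using jL L_def by simp
  have distD: "distinct D" unfolding D_def using dist yI(2) P_def by simp
  have cycD': "is_cycle E' D" unfolding is_cycle_def using lenD distD j ceD_E'' unfolding E'_def by auto
  have cycD: "is_cycle E D" unfolding is_cycle_def using lenD distD j ceD_E'' E''E by auto
  have wD: "weight w' D = weight w D" unfolding weight_def
  proof (rule sum.cong[OF refl])
    fix e assume "e \<in> cycle_edges D"
    then have "e \<in> E''" using ceD_E'' by blast
    then have "c \<notin> e" by (rule nc_E'')
    then have "e \<noteq> {c, y}" by blast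
    then show "w' e = w e" by (rule ww')
  qed
  have odD: "odd (weight w' D)" using od wD D_def by simp
  define R where "R = edge_rel (aedges E w)"
  define R' where "R' = edge_rel (aedges E' w')"
  have cyE': "{c, y} \<in> aedges E' w'" unfolding aedges_iff E'_def w'_def by simp
  have inR': "(a, b) \<in> R'" if "{a, b} \<in> aedges E w" "{a, b} \<inter> I = {}" for a b
  proof -
    have "{a, b} \<in> E''" using that unfolding E''_def aedges_iff by simp
    moreover have "w' {a, b} = 3"
    proof (cases "{a, b} = {c, y}")
      case True then show ?thesis unfolding w'_def by simp
    next
      case False then show ?thesis using that ww' unfolding aedges_iff by simp
    qed
    ultimately have "{a, b} \<in> aedges E' w'" unfolding aedges_iff E'_def by simp
    then show ?thesis unfolding R'_def edge_rel_iff .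
  qed
  have yc: "(y, c) \<in> R'"
  proof -
    have "{y, c} = {c, y}" by (simp add: insert_commute)
    then show ?thesis unfolding R'_def edge_rel_iff using cyE' by simp
  qed
  have cV': "c \<in> V' - set D" unfolding V'_def using cV cD by simp
  have toy: "\<exists>z\<in>V' - set D. (x, z) \<in> R'\<^sup>*" if "(x, y) \<in> R'\<^sup>*" for x
    using that yc cV' by (meson rtrancl.rtrancl_into_rtrancl)
  have main: "(v \<in> set P \<and> (x, v) \<in> R'\<^sup>*) \<or> (\<exists>z\<in>V' - set D. (x, z) \<in> R'\<^sup>*)"
    if x: "x \<in> set P" and xv: "(x, v) \<in> R\<^sup>*" for x v
    using xv
  proof (induction rule: rtrancl_induct)
    case base
    then show ?case using x by simp
  next
    case (step v v')
    show ?case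
    proof (cases "\<exists>z\<in>V' - set D. (x, z) \<in> R'\<^sup>*")
      case True then show ?thesis by simp
    next
      case False
      then have vP: "v \<in> set P" and xv': "(x, v) \<in> R'\<^sup>*" using step.IH by auto
      have ea: "{v, v'} \<in> aedges E w" using step.hyps(2) unfolding R_def edge_rel_iff .
      have vI: "v \<notin> I" using vP PI by blast
      show ?thesis
      proof (cases "v' \<in> set cs")
        case False
        then have v'I: "v' \<notin> I" using csPI by blast
        have "{v, v'} \<inter> I = {}" using vI v'I by blast
        then have st: "(v, v') \<in> R'" using inR' ea by blast
        then have xv'': "(x, v') \<in> R'\<^sup>*" using xv' by simp
        show ?thesis
        proof (cases "v' = y")
          case True
          then show ?thesis using toy xv'' by simp
        next
          case False
          have "v' \<in> V" using ea sg_edge_in[OF sg] unfolding aedges_iff by blast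
          then have "v' \<in> V' - set D" unfolding V'_def using v'I False \<open>v' \<notin> set cs\<close> setD csPI by auto
          then show ?thesis using xv'' by blast
        qed
      next
        case True
        have vcs: "v \<in> set cs" using vP csPI by blast
        have ce: "{v, v'} \<in> cycle_edges cs" using NC[OF vcs True ea] .
        show ?thesis
        proof (cases "v' \<in> set P")
          case True
          then have "{v, v'} \<inter> I = {}" using vI PI by blast
          then have "(v, v') \<in> R'" using inR' ea by blast
          then show ?thesis using xv' True by (meson rtrancl.rtrancl_into_rtrancl)
        next
          case False
          then have v'I: "v' \<in> set (drop (Suc j) cs)" using \<open>v' \<in> set cs\<close> csPI unfolding I_def by blast
          have "v = cs ! 0 \<or> v = cs ! j"
            using ear_pos[OF dist L3[unfolded L_def] sjL[unfolded L_def] vP[unfolded P_def] v'I ce] .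
          then have vy: "{v, y} \<in> aedges E w" using e0 ej by auto
          have "{v, y} \<inter> I = {}" using vI yI by blast
          then have "(v, y) \<in> R'" using inR' vy by blast
          then have "(x, y) \<in> R'\<^sup>*" using xv' by simp
          then show ?thesis using toy by simp
        qed
      qed
    qed
  qed
  have connD: "conn E' w' D V'" unfolding conn_def
  proof
    fix x assume xD: "x \<in> set D"
    show "\<exists>z\<in>V' - set D. (x, z) \<in> (edge_rel (aedges E' w'))\<^sup>*"
    proof (cases "x = y")
      case True
      then show ?thesis using yc cV' unfolding R'_def by blast
    next
      case False
      then have xP: "x \<in> set P" using xD setD by simp
      then have "x \<in> set cs" using csPI by blast
      then obtain z where z: "z \<in> V - set cs" "(x, z) \<in> R\<^sup>*" using cn unfolding conn_def R_def by blast
      have "z \<notin> set P" using z(1) csPI by blast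
      then show ?thesis using main[OF xP z(2)] unfolding R'_def by blast
    qed
  qed
  have hs: "has_short V' E' w'" by (rule IH[OF sizes inst' cycD' odD connD])
  then obtain cs' where cs': "is_cycle E' cs'" "odd (weight w' cs')" "weight w' cs' \<le> 3 * card V'"
    unfolding has_short_def by blast
  have notcy: "{c, y} \<notin> cycle_edges cs'"
  proof
    assume h: "{c, y} \<in> cycle_edges cs'"
    then have "c \<in> set cs'" using cycle_edges_sub_set by blast
    then obtain p where p: "p < length cs'" "c = cs' ! p" by (auto simp: in_set_conv_nth)
    obtain e1 e2 where e12: "e1 \<in> cycle_edges cs'" "e2 \<in> cycle_edges cs'" "c \<in> e1" "c \<in> e2" "e1 \<noteq> e2"
      using two_edges[OF cs'(1) p(1)] p(2) by blast
    have "e1 \<in> E'" "e2 \<in> E'" using e12 cs'(1) unfolding is_cycle_def by auto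
    then have "e1 = {c, y}" "e2 = {c, y}" using e12 nc_E'' unfolding E'_def by auto
    then show False using e12(5) by simp
  qed
  have sub: "cycle_edges cs' \<subseteq> E''" using cs'(1) notcy unfolding is_cycle_def E'_def by auto
  have cycE: "is_cycle E cs'" using cs'(1) sub E''E unfolding is_cycle_def by auto
  have "weight w' cs' = weight w cs'" unfolding weight_def
  proof (rule sum.cong[OF refl])
    fix e assume "e \<in> cycle_edges cs'"
    then have "e \<noteq> {c, y}" using notcy by blast
    then show "w' e = w e" by (rule ww')
  qed
  moreover have "card V' \<le> card V" unfolding V'_def using finV by (simp add: card_mono)
  ultimately have "has_short V E w" unfolding has_short_def using cycE cs'(2,3) by auto
  then show False using noshort by simp
qed


lemma par2:
  fixes x y z :: nat
  assumes "x + y = z + 12" "odd x" "odd z"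
  shows "even y"
  using assms by presburger

lemma w4: "w e \<in> {3, 4, 5} \<Longrightarrow> even (w e + 6) \<Longrightarrow> w e = 4"
  by auto

lemma ear_case:
  assumes cyc: "is_cycle E cs" and od: "odd (weight w cs)" and cn: "conn E w cs V"
    and j: "1 \<le> j" "j < length cs"
    and y: "y \<in> V" "y \<notin> set cs"
    and e0: "{cs!0, y} \<in> aedges E w" and ej: "{cs!j, y} \<in> aedges E w"
  shows "\<exists>m<length cs. eg cs m = {cs!0, cs!j} \<and> w (eg cs m) = 4"
proof -
  define L where "L = length cs"
  define rot where "rot = rotate j cs"
  have dist: "distinct cs" and L3: "3 \<le> L" using cycle_len[OF cyc] L_def by auto
  have jL: "j < L" using j L_def by simp
  have NC: "{a, b} \<in> cycle_edges cs" if "a \<in> set cs" "b \<in> set cs" "{a, b} \<in> aedges E w" for a b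
    using nochord[OF cyc od cn that] .
  have w0: "w {cs!0, y} = 3" "w {y, cs!0} = 3" using e0 unfolding aedges_iff by (auto simp: insert_commute)
  have wj: "w {cs!j, y} = 3" "w {y, cs!j} = 3" using ej unfolding aedges_iff by (auto simp: insert_commute)
  have wD1: "weight w (take (Suc j) cs @ [y]) = (\<Sum>i<j. w (eg cs i)) + 6"
    using weight_ear[OF dist jL[unfolded L_def] j(1) y(2), of w] w0 wj by simp
  have rl: "length rot = L" unfolding rot_def L_def by simp
  have distr: "distinct rot" unfolding rot_def using dist by simp
  have jpos: "0 < j" using j by simp
  have r0: "rot ! 0 = cs ! j" unfolding rot_def using rotate_nth0 jL L_def by simp
  have rb: "rot ! (L - j) = cs ! 0" unfolding rot_def L_def using rotate_nth_back[OF _ jpos] jL L_def by simp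
  have yr: "y \<notin> set rot" unfolding rot_def using y(2) by simp
  have lj: "L - j < length rot" "1 \<le> L - j" using rl jL jpos by auto
  have wD2a: "weight w (take (Suc (L - j)) rot @ [y]) = (\<Sum>i<L - j. w (eg rot i)) + w {rot!(L-j), y} + w {y, rot!0}"
    using weight_ear[OF distr lj(1) lj(2) yr, of w] .
  have wD2: "weight w (take (Suc (L - j)) rot @ [y]) = (\<Sum>i\<in>{j..<L}. w (eg cs i)) + 6"
    using wD2a rb r0 w0 wj sum_rot[of j cs w] jL L_def unfolding rot_def by simp
  have wc: "weight w cs = (\<Sum>i<j. w (eg cs i)) + (\<Sum>i\<in>{j..<L}. w (eg cs i))"
    using weight_sum[OF cyc] sum_split[of j L "\<lambda>i. w (eg cs i)"] jL L_def by simp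
  have tot: "weight w (take (Suc j) cs @ [y]) + weight w (take (Suc (L - j)) rot @ [y]) = weight w cs + 12"
    using wD1 wD2 wc by simp
  then have "odd (weight w (take (Suc j) cs @ [y])) \<or> odd (weight w (take (Suc (L - j)) rot @ [y]))"
    using od odd_split[of _ _ "weight w cs" 6] by simp
  then show ?thesis
  proof
    assume o1: "odd (weight w (take (Suc j) cs @ [y]))"
    have jl: "j = L - 1"
    proof (rule ccontr)
      assume "j \<noteq> L - 1"
      then have "j + 2 \<le> length cs" using jL L_def by simp
      then show False using ear_odd[OF cyc cn NC j(1) _ y e0 ej o1] by blast
    qed
    have "even (weight w (take (Suc (L - j)) rot @ [y]))" using par2[OF tot o1 od] .
    moreover have "(\<Sum>i\<in>{j..<L}. w (eg cs i)) = w (eg cs (L - 1))"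
    proof -
      have "{j..<L} = {L - 1}" using jl L3 by auto
      then show ?thesis by simp
    qed
    ultimately have ev: "even (w (eg cs (L - 1)) + 6)" using wD2 by simp
    have "eg cs (L - 1) \<in> E" using cycle_eg_E[OF cyc] L3 L_def by simp
    then have w4': "w (eg cs (L - 1)) = 4" using w4[OF wts ev] by simp
    have "Suc (L - 1) mod L = 0" using L3 by simp
    then have "eg cs (L - 1) = {cs!0, cs!j}" unfolding eg_def using jl L_def by (simp add: insert_commute)
    then show ?thesis using w4' L3 L_def by (metis diff_less zero_less_numeral order_less_le_trans zero_less_one)
  next
    assume o2: "odd (weight w (take (Suc (L - j)) rot @ [y]))"
    have j1: "j = 1"
    proof (rule ccontr)
      assume "j \<noteq> 1"
      then have j2: "L - j + 2 \<le> length rot" using j rl jL by simp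
      have cr: "is_cycle E rot" unfolding rot_def using cyc by (simp add: is_cycle_rotate)
      have cnr: "conn E w rot V" unfolding rot_def using cn by (simp add: conn_rotate)
      have NCr: "{a, b} \<in> cycle_edges rot" if "a \<in> set rot" "b \<in> set rot" "{a, b} \<in> aedges E w" for a b
        using NC[of a b] that unfolding rot_def by (simp add: cycle_edges_rotate)
      have e0r: "{rot!0, y} \<in> aedges E w" using ej r0 by simp
      have ejr: "{rot!(L - j), y} \<in> aedges E w" using e0 rb by simp
      show False using ear_odd[OF cr cnr NCr lj(2) j2 y(1) yr e0r ejr o2] .
    qed
    have "even (weight w (take (Suc j) cs @ [y]))"
      using par2[of "weight w (take (Suc (L - j)) rot @ [y])" "weight w (take (Suc j) cs @ [y])" "weight w cs"] tot o2 od
      by simp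
    then have ev: "even (w (eg cs 0) + 6)" using wD1 j1 by simp
    have "0 < length cs" using L3 L_def by linarith
    then have "eg cs 0 \<in> E" by (rule cycle_eg_E[OF cyc])
    then have w4': "w (eg cs 0) = 4" using w4[OF wts ev] by simp
    have "eg cs 0 = {cs!0, cs!j}" unfolding eg_def using j1 L3 L_def by simp
    then show ?thesis using w4' L3 L_def by (metis zero_less_numeral order_less_le_trans)
  qed
qed

lemma ear:
  assumes cyc: "is_cycle E cs" and od: "odd (weight w cs)" and cn: "conn E w cs V"
    and y: "y \<in> V" "y \<notin> set cs"
    and pq: "p < length cs" "q < length cs" "p \<noteq> q"
    and ep: "{cs!p, y} \<in> aedges E w" and eq: "{cs!q, y} \<in> aedges E w"
  shows "\<exists>m<length cs. eg cs m = {cs!p, cs!q} \<and> w (eg cs m) = 4"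
proof -
  define L where "L = length cs"
  define rot where "rot = rotate p cs"
  define j where "j = (q + L - p) mod L"
  have dist: "distinct cs" and L3: "3 \<le> L" using cycle_len[OF cyc] L_def by auto
  have rl: "length rot = L" unfolding rot_def L_def by simp
  have jL: "j < L" unfolding j_def using L3 by simp
  have r0: "rot ! 0 = cs ! p" unfolding rot_def by (rule rotate_nth0[OF pq(1)])
  have rj: "rot ! j = cs ! q" unfolding rot_def j_def using rot_pos[OF pq(1)[folded L_def] pq(2)[folded L_def] L_def] by simp
  have j0: "j \<noteq> 0"
  proof
    assume "j = 0"
    then have "cs ! p = cs ! q" using r0 rj by simp
    then show False using pq dist by (simp add: nth_eq_iff_index_eq)
  qed
  have cr: "is_cycle E rot" unfolding rot_def using cyc by (simp add: is_cycle_rotate)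
  have odr: "odd (weight w rot)" unfolding rot_def using od by (simp add: weight_rotate)
  have cnr: "conn E w rot V" unfolding rot_def using cn by (simp add: conn_rotate)
  have yr: "y \<notin> set rot" unfolding rot_def using y(2) by simp
  have jj: "1 \<le> j" "j < length rot" using j0 jL rl by auto
  obtain m where m: "m < length rot" "eg rot m = {rot!0, rot!j}" "w (eg rot m) = 4"
    using ear_case[OF cr odr cnr jj y(1) yr] ep eq r0 rj by auto
  have "eg rot m = eg cs ((m + p) mod L)" unfolding rot_def L_def using m(1) rl L_def unfolding rot_def
    by (simp add: eg_rotate)
  moreover have "(m + p) mod L < L" using L3 by simp
  ultimately show ?thesis using m r0 rj L_def by metis
qed

end



lemma tourn3:
  assumes ab: "a \<noteq> b" and ac: "a \<noteq> c" and bc: "b \<noteq> c"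
    and pairs: "\<And>x y. x \<in> {a,b,c} \<Longrightarrow> y \<in> {a,b,c} \<Longrightarrow> x \<noteq> y \<Longrightarrow> P x y \<or> P y x"
    and uniq: "\<And>x y z. P x y \<Longrightarrow> P x z \<Longrightarrow> y = z"
  shows "\<exists>y\<in>{a,b,c}. P a y"
proof (rule ccontr)
  assume "\<not> (\<exists>y\<in>{a,b,c}. P a y)"
  then have "\<not> P a b" "\<not> P a c" by auto
  then have "P b a" "P c a" using pairs[of a b] pairs[of a c] ab ac by auto
  moreover have "P b c \<or> P c b" using pairs[of b c] bc by auto
  ultimately show False using uniq ab ac bc by metis
qed

lemma no4:
  assumes d: "distinct [a, b, c, d]"
    and pairs: "\<And>x y. x \<in> {a,b,c,d} \<Longrightarrow> y \<in> {a,b,c,d} \<Longrightarrow> x \<noteq> y \<Longrightarrow> P x y \<or> P y x"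
    and uniq: "\<And>x y z. P x y \<Longrightarrow> P x z \<Longrightarrow> y = z"
  shows False
proof -
  have p3: "\<And>x y. x \<in> {a,b,c} \<Longrightarrow> y \<in> {a,b,c} \<Longrightarrow> x \<noteq> y \<Longrightarrow> P x y \<or> P y x"
    using pairs by auto
  obtain ya where ya: "ya \<in> {a,b,c}" "P a ya" using tourn3[of a b c P] d p3 uniq by auto
  have p3b: "\<And>x y. x \<in> {b,a,c} \<Longrightarrow> y \<in> {b,a,c} \<Longrightarrow> x \<noteq> y \<Longrightarrow> P x y \<or> P y x"
    using pairs by auto
  obtain yb where yb: "yb \<in> {b,a,c}" "P b yb" using tourn3[of b a c P] d p3b uniq by auto
  have "\<not> P a d" using ya uniq d by auto
  then have "P d a" using pairs[of a d] d by auto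
  have "\<not> P b d" using yb uniq d by auto
  then have "P d b" using pairs[of b d] d by auto
  then show False using \<open>P d a\<close> uniq d by auto
qed

lemma comb:
  fixes v :: "'b \<Rightarrow> nat"
  assumes fin: "finite F"
    and v2: "\<And>a. a \<in> F \<Longrightarrow> v a \<le> 2"
    and pairs: "\<And>a b. a \<in> F \<Longrightarrow> b \<in> F \<Longrightarrow> a \<noteq> b \<Longrightarrow> (P a b \<and> v a \<le> 1) \<or> (P b a \<and> v b \<le> 1)"
    and uniq: "\<And>a b c. P a b \<Longrightarrow> P a c \<Longrightarrow> b = c"
  shows "sum v F \<le> 3"
proof -
  have c4: "card F \<le> 3"
  proof (rule ccontr)
    assume "\<not> card F \<le> 3"
    then have "4 \<le> card F" by simp
    then obtain S where S: "S \<subseteq> F" "card S = 4" by (meson obtain_subset_with_card_n)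
    then obtain a b c d where "S = {a, b, c, d}" "distinct [a, b, c, d]"
      by (auto simp: card_Suc_eq numeral_eq_Suc)
    then show False using no4[of a b c d P] pairs S uniq by blast
  qed
  consider "card F = 0" | "card F = 1" | "card F = 2" | "card F = 3" using c4 by linarith
  then show ?thesis
  proof cases
    case 1
    then have "F = {}" using fin by simp
    then show ?thesis by simp
  next
    case 2
    then obtain a where "F = {a}" by (auto simp: card_Suc_eq)
    then show ?thesis using v2 by simp
  next
    case 3
    then obtain a b where ab: "F = {a, b}" "a \<noteq> b" by (auto simp: card_Suc_eq numeral_eq_Suc)
    then have "(P a b \<and> v a \<le> 1) \<or> (P b a \<and> v b \<le> 1)" using pairs by simp
    then show ?thesis using ab v2[of a] v2[of b] by auto
  next
    case 4
    then obtain a b c where abc: "F = {a, b, c}" "a \<noteq> b" "a \<noteq> c" "b \<noteq> c"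
      by (auto simp: card_Suc_eq numeral_eq_Suc)
    have one: "v x \<le> 1" if x: "x \<in> F" for x
    proof (rule ccontr)
      assume nx: "\<not> v x \<le> 1"
      obtain y z where yz: "F = {x, y, z}" "x \<noteq> y" "x \<noteq> z" "y \<noteq> z"
        using x abc by auto
      have "P y x" using pairs[of x y] yz nx by auto
      moreover have "P z x" using pairs[of x z] yz nx by auto
      moreover have "P y z \<or> P z y" using pairs[of y z] yz by auto
      ultimately show False using uniq yz by metis
    qed
    have s: "sum v F = v a + v b + v c" using abc by simp
    have "v a \<le> 1" "v b \<le> 1" "v c \<le> 1" using one abc(1) by auto
    then show ?thesis using s by linarith
  qed
qed



lemma doubleton_same: "{x, y} = {x, y'} \<Longrightarrow> y = y'"
  by (auto simp: doubleton_eq_iff)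

lemma counting:
  fixes cs :: "'a list" and V :: "'a set" and A :: "'a set set" and w :: "'a set \<Rightarrow> nat"
  assumes dist: "distinct cs" and L3: "3 \<le> length cs" and csV: "set cs \<subseteq> V" and finV: "finite V"
    and wts: "\<And>i. i < length cs \<Longrightarrow> w (eg cs i) \<in> {3, 4, 5}"
    and lst: "w (eg cs (length cs - 1)) \<noteq> 3"
    and Aw: "\<And>e. e \<in> A \<Longrightarrow> w e = 3"
    and AV: "\<And>u v. {u, v} \<in> A \<Longrightarrow> u \<in> V \<and> v \<in> V"
    and NC: "\<And>a b. a \<in> set cs \<Longrightarrow> b \<in> set cs \<Longrightarrow> {a, b} \<in> A \<Longrightarrow> {a, b} \<in> cycle_edges cs"
    and CN: "\<And>x. x \<in> set cs \<Longrightarrow> \<exists>z\<in>V - set cs. (x, z) \<in> (edge_rel A)\<^sup>*"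
    and EAR: "\<And>y p q. y \<in> V \<Longrightarrow> y \<notin> set cs \<Longrightarrow> p < length cs \<Longrightarrow> q < length cs \<Longrightarrow> p \<noteq> q \<Longrightarrow>
               {cs!p, y} \<in> A \<Longrightarrow> {cs!q, y} \<in> A \<Longrightarrow> \<exists>m<length cs. eg cs m = {cs!p, cs!q} \<and> w (eg cs m) = 4"
  shows "(\<Sum>i<length cs. w (eg cs i)) \<le> 3 * card V"
proof -
  define L where "L = length cs"
  define N where "N = {i. i < L \<and> w (eg cs i) \<noteq> 3}"
  define r where "r k = card {i \<in> N. i < k}" for k
  have L0: "0 < L" using L3 L_def by linarith
  have finN: "finite N" unfolding N_def by simp
  have NL: "N \<subseteq> {..<L}" unfolding N_def by auto
  have lastN: "L - 1 \<in> N" unfolding N_def L_def using lst L3 by simp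
  have r_less: "r i < r i'" if "i \<in> N" "i' \<in> N" "i < i'" for i i'
  proof -
    have "{x \<in> N. x < i} \<subset> {x \<in> N. x < i'}" using that by auto
    moreover have "finite {x \<in> N. x < i'}" using finN by simp
    ultimately show ?thesis unfolding r_def by (rule psubset_card_mono[rotated])
  qed
  have r_inj: "i = i'" if "i \<in> N" "i' \<in> N" "r i = r i'" for i i'
  proof (rule ccontr)
    assume "i \<noteq> i'"
    then have "i < i' \<or> i' < i" by linarith
    then show False using r_less that by fastforce
  qed
  have r_step: "r (Suc m) = r m" if "m \<notin> N" for m
  proof -
    have "{i \<in> N. i < Suc m} = {i \<in> N. i < m}" using that less_Suc_eq by auto
    then show ?thesis unfolding r_def by simp
  qed
  have ncs: "cs ! k \<in> set cs" if "k < L" for k using that L_def by simp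
  have exist: "\<exists>k y. k < L \<and> y \<in> V \<and> y \<notin> set cs \<and> r k = r i \<and> {cs!k, y} \<in> A" if iN: "i \<in> N" for i
  proof -
    have iL: "i < L" using iN unfolding N_def by simp
    obtain z where z: "z \<in> V - set cs" "(cs!i, z) \<in> (edge_rel A)\<^sup>*" using CN[OF ncs[OF iL]] by blast
    define G where "G = (\<exists>k y. k < L \<and> y \<in> V \<and> y \<notin> set cs \<and> r k = r i \<and> {cs!k, y} \<in> A)"
    have inv: "(\<exists>k<L. v = cs!k \<and> r k = r i) \<or> G" if "(cs!i, v) \<in> (edge_rel A)\<^sup>*" for v
      using that
    proof (induction rule: rtrancl_induct)
      case base
      then show ?case using iL by blast
    next
      case (step v v')
      show ?case
      proof (cases G)
        case True then show ?thesis by simp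
      next
        case False
        then obtain k where k: "k < L" "v = cs!k" "r k = r i" using step.IH by blast
        have vA: "{v, v'} \<in> A" using step.hyps(2) unfolding edge_rel_iff .
        show ?thesis
        proof (cases "v' \<in> set cs")
          case False
          have "v' \<in> V" using AV[OF vA] by simp
          then have G using k False vA unfolding G_def by blast
          then show ?thesis by simp
        next
          case True
          then obtain k' where k': "k' < L" "v' = cs!k'" using L_def by (auto simp: in_set_conv_nth)
          have "{v, v'} \<in> cycle_edges cs" using NC[OF _ True vA] k ncs by simp
          then obtain m where m: "m < L" "eg cs m = {cs!k, cs!k'}" using k k' L_def unfolding cycle_edges_eg by auto
          have pos: "(k = m \<and> k' = Suc m mod L) \<or> (k' = m \<and> k = Suc m mod L)"
            using edge_pos[OF dist L3, of k k' m] k k' m L_def by simp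
          have "w (eg cs m) = 3" using Aw vA m(2) k k' by simp
          then have mN: "m \<notin> N" unfolding N_def by simp
          then have "m \<noteq> L - 1" using lastN by auto
          then have "Suc m < L" using m(1) by simp
          then have sm: "Suc m mod L = Suc m" by simp
          have "r (Suc m) = r m" using r_step[OF mN] .
          then have "r k' = r k" using pos sm by auto
          then show ?thesis using k' k by auto
        qed
      qed
    qed
    have "\<not> (\<exists>k<L. z = cs!k \<and> r k = r i)" using z(1) ncs by auto
    then have G using inv[OF z(2)] by blast
    then show ?thesis unfolding G_def .
  qed
  have "\<forall>i\<in>N. \<exists>p. fst p < L \<and> snd p \<in> V \<and> snd p \<notin> set cs \<and> r (fst p) = r i \<and> {cs!(fst p), snd p} \<in> A"
    using exist by fastforce
  then obtain f where f: "\<forall>i\<in>N. fst (f i) < L \<and> snd (f i) \<in> V \<and> snd (f i) \<notin> set cs \<and> r (fst (f i)) = r i \<and> {cs!(fst (f i)), snd (f i)} \<in> A"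
    by (metis bchoice)
  define kk where "kk i = fst (f i)" for i
  define yy where "yy i = snd (f i)" for i
  have kkL: "kk i < L" and yyV: "yy i \<in> V" and yyc: "yy i \<notin> set cs" and rk: "r (kk i) = r i"
    and kyA: "{cs!(kk i), yy i} \<in> A" if "i \<in> N" for i
    using f that unfolding kk_def yy_def by auto
  have kk_inj: "a = b" if "a \<in> N" "b \<in> N" "kk a = kk b" for a b
    using r_inj[OF that(1,2)] rk[OF that(1)] rk[OF that(2)] that(3) by simp
  define v where "v i = w (eg cs i) - 3" for i
  have fiber: "sum v {i \<in> N. yy i = z} \<le> 3" for z
  proof -
    define F where "F = {i \<in> N. yy i = z}"
    define P where "P a b = (eg cs a = {cs!(kk a), cs!(kk b)})" for a b
    have finF: "finite F" unfolding F_def using finN by simp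
    have v2: "v a \<le> 2" if "a \<in> F" for a
    proof -
      have "a < L" using that unfolding F_def N_def by simp
      then have "w (eg cs a) \<in> {3,4,5}" using wts L_def by simp
      then show ?thesis unfolding v_def by auto
    qed
    have pairs: "(P a b \<and> v a \<le> 1) \<or> (P b a \<and> v b \<le> 1)" if ab: "a \<in> F" "b \<in> F" "a \<noteq> b" for a b
    proof -
      have aN: "a \<in> N" and bN: "b \<in> N" using ab unfolding F_def by auto
      have ya: "yy a = z" and yb: "yy b = z" using ab unfolding F_def by auto
      have kab: "kk a \<noteq> kk b" using kk_inj[OF aN bN] ab(3) by auto
      obtain m where m: "m < L" "eg cs m = {cs!(kk a), cs!(kk b)}" "w (eg cs m) = 4"
        using EAR[of z "kk a" "kk b"] yyV[OF aN] yyc[OF aN] kkL[OF aN] kkL[OF bN] kab kyA[OF aN] kyA[OF bN] ya yb L_def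
        by auto
      have mN: "m \<in> N" unfolding N_def using m by simp
      have "(kk a = m \<and> kk b = Suc m mod L) \<or> (kk b = m \<and> kk a = Suc m mod L)"
        using edge_pos[OF dist L3, of "kk a" "kk b" m] kkL[OF aN] kkL[OF bN] m L_def by simp
      then show ?thesis
      proof
        assume "kk a = m \<and> kk b = Suc m mod L"
        then have "r a = r m" using rk[OF aN] by simp
        then have "a = m" using r_inj[OF aN mN] by simp
        then have "P a b" "v a \<le> 1" unfolding P_def v_def using m by auto
        then show ?thesis by simp
      next
        assume "kk b = m \<and> kk a = Suc m mod L"
        then have "r b = r m" using rk[OF bN] by simp
        then have "b = m" using r_inj[OF bN mN] by simp
        then have "P b a" "v b \<le> 1" unfolding P_def v_def using m by (auto simp: insert_commute)
        then show ?thesis by simp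
      qed
    qed
    have uniq: "b = c" if "P a b" "P a c" "a \<in> F" "b \<in> F" "c \<in> F" for a b c
    proof -
      have "{cs!(kk a), cs!(kk b)} = {cs!(kk a), cs!(kk c)}" using that unfolding P_def by simp
      then have "cs!(kk b) = cs!(kk c)" by (rule doubleton_same)
      moreover have "kk b < L" "kk c < L" using that kkL unfolding F_def by auto
      ultimately have "kk b = kk c" using dist L_def by (simp add: nth_eq_iff_index_eq)
      then show ?thesis using kk_inj that unfolding F_def by auto
    qed
    define P' where "P' a b = (a \<in> F \<and> b \<in> F \<and> P a b)" for a b
    have "sum v F \<le> 3"
    proof (rule comb[OF finF v2, where P=P'])
      fix a b assume "a \<in> F" "b \<in> F" "a \<noteq> b"
      then show "(P' a b \<and> v a \<le> 1) \<or> (P' b a \<and> v b \<le> 1)" using pairs unfolding P'_def by blast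
    next
      fix a b c assume "P' a b" "P' a c"
      then show "b = c" using uniq unfolding P'_def by blast
    qed
    then show ?thesis unfolding F_def .
  qed
  have w3: "3 \<le> w (eg cs i)" if "i < L" for i using wts[of i] that L_def by auto
  have s1: "(\<Sum>i<L. w (eg cs i)) = (\<Sum>i<L. 3 + v i)"
    by (rule sum.cong) (use w3 v_def in auto)
  also have "\<dots> = 3 * L + (\<Sum>i<L. v i)" by (simp add: sum.distrib)
  finally have s2: "(\<Sum>i<L. w (eg cs i)) = 3 * L + (\<Sum>i<L. v i)" .
  have z0: "\<forall>i\<in>{..<L} - N. v i = 0" unfolding N_def v_def by auto
  have sN: "sum v {..<L} = sum v N" by (rule sum.mono_neutral_right[OF _ NL z0]) simp
  have "sum v N = (\<Sum>z\<in>yy ` N. sum v {i \<in> N. yy i = z})"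
    by (rule sum.image_gen[OF finN])
  also have "\<dots> \<le> (\<Sum>z\<in>yy ` N. 3)" by (rule sum_mono) (rule fiber)
  also have "\<dots> = 3 * card (yy ` N)" by simp
  finally have s3: "sum v N \<le> 3 * card (yy ` N)" .
  have tot: "(\<Sum>i<L. w (eg cs i)) \<le> 3 * L + 3 * card (yy ` N)" using s2 sN s3 by simp
  have "yy ` N \<subseteq> V - set cs" using yyV yyc by auto
  then have "card (yy ` N) \<le> card (V - set cs)" using finV by (simp add: card_mono)
  also have "card (V - set cs) = card V - L" using csV finV dist L_def
    by (simp add: card_Diff_subset distinct_card)
  finally have c1: "card (yy ` N) \<le> card V - L" .
  have "L \<le> card V" using csV finV dist L_def by (metis card_mono distinct_card)
  then have "(\<Sum>i<L. w (eg cs i)) \<le> 3 * card V" using tot c1 by linarith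
  then show ?thesis using L_def by simp
qed



context mc begin

lemma count_contra:
  assumes cyc: "is_cycle E cs" and od: "odd (weight w cs)" and cn: "conn E w cs V"
  shows False
proof -
  define L where "L = length cs"
  have dist: "distinct cs" and L3: "3 \<le> L" using cycle_len[OF cyc] L_def by auto
  have csV: "set cs \<subseteq> V" using cycle_set_V[OF sg cyc] .
  have LV: "L \<le> card V" using csV finV dist L_def by (metis card_mono distinct_card)
  have ex: "\<exists>p<L. w (eg cs p) \<noteq> 3"
  proof (rule ccontr)
    assume "\<not> (\<exists>p<L. w (eg cs p) \<noteq> 3)"
    then have all: "w (eg cs p) = 3" if "p < L" for p using that by blast
    have "weight w cs = (\<Sum>i<L. w (eg cs i))" using weight_sum[OF cyc] L_def by simp
    also have "\<dots> = (\<Sum>i<L. 3)" using all by simp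
    also have "\<dots> = 3 * L" by simp
    finally have "weight w cs \<le> 3 * card V" using LV by simp
    then have "has_short V E w" unfolding has_short_def using cyc od by blast
    then show False using noshort by simp
  qed
  then obtain p where p: "p < L" "w (eg cs p) \<noteq> 3" by blast
  define sp where "sp = Suc p"
  define rot where "rot = rotate sp cs"
  have rl: "length rot = L" unfolding rot_def L_def by simp
  have cr: "is_cycle E rot" unfolding rot_def using cyc by (simp add: is_cycle_rotate)
  have odr: "odd (weight w rot)" unfolding rot_def using od by (simp add: weight_rotate)
  have cnr: "conn E w rot V" unfolding rot_def using cn by (simp add: conn_rotate)
  have distr: "distinct rot" using cycle_len[OF cr] by simp
  have L3r: "3 \<le> length rot" using rl L3 by simp
  have lastr: "eg rot (length rot - 1) = eg cs p"
  proof -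
    have "L - 1 < length cs" using L3 L_def by simp
    then have "eg rot (L - 1) = eg cs ((L - 1 + sp) mod length cs)" unfolding rot_def by (rule eg_rotate)
    also have "L - 1 + sp = p + L" using L3 sp_def by simp
    also have "(p + L) mod length cs = p" using p L_def by simp
    finally show ?thesis using rl by simp
  qed
  have "(\<Sum>i<length rot. w (eg rot i)) \<le> 3 * card V"
  proof (rule counting[where A = "aedges E w"])
    show "distinct rot" using distr .
    show "3 \<le> length rot" using L3r .
    show "set rot \<subseteq> V" unfolding rot_def using csV by simp
    show "finite V" using finV .
    show "w (eg rot i) \<in> {3, 4, 5}" if "i < length rot" for i
      using wts cycle_eg_E[OF cr that] by blast
    show "w (eg rot (length rot - 1)) \<noteq> 3" using lastr p by simp
    show "w e = 3" if "e \<in> aedges E w" for e using that unfolding aedges_iff by simp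
    show "u \<in> V \<and> v \<in> V" if "{u, v} \<in> aedges E w" for u v
      using that sg_edge_in[OF sg] unfolding aedges_iff by blast
    show "{a, b} \<in> cycle_edges rot" if "a \<in> set rot" "b \<in> set rot" "{a, b} \<in> aedges E w" for a b
      using nochord[OF cr odr cnr that] .
    show "\<exists>z\<in>V - set rot. (x, z) \<in> (edge_rel (aedges E w))\<^sup>*" if "x \<in> set rot" for x
      using cnr that unfolding conn_def by blast
    show "\<exists>m<length rot. eg rot m = {rot!pp, rot!q} \<and> w (eg rot m) = 4"
      if "y \<in> V" "y \<notin> set rot" "pp < length rot" "q < length rot" "pp \<noteq> q"
         "{rot!pp, y} \<in> aedges E w" "{rot!q, y} \<in> aedges E w" for y pp q
      using ear[OF cr odr cnr that] .
  qed
  then have "weight w rot \<le> 3 * card V" using weight_sum[OF cr] by simp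
  then have "weight w cs \<le> 3 * card V" unfolding rot_def by (simp add: weight_rotate)
  then have "has_short V E w" unfolding has_short_def using cyc od by blast
  then show False using noshort by simp
qed

end

lemma LT_aux:
  "\<forall>(V::'a set) E w cs. card V + card E = n \<longrightarrow> inst V E w \<longrightarrow> is_cycle E cs \<longrightarrow>
      odd (weight w cs) \<longrightarrow> conn E w cs V \<longrightarrow> has_short V E w"
proof (induction n rule: less_induct)
  case (less n)
  show ?case
  proof (intro allI impI)
    fix V :: "'a set" and E w cs
    assume n: "card V + card E = n" and i: "inst V E w" and c: "is_cycle E cs"
      and o: "odd (weight w cs)" and cn: "conn E w cs V"
    show "has_short V E w"
    proof (rule ccontr)
      assume ns: "\<not> has_short V E w"
      have IH: "has_short V' E' w'"
        if "card V' + card E' < card V + card E" "inst V' E' w'" "is_cycle E' cs'"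
           "odd (weight w' cs')" "conn E' w' cs' V'" for V' :: "'a set" and E' w' cs'
        using less.IH[of "card V' + card E'"] that n by blast
      interpret mc V E w
        by (rule mc.intro[OF i]) (use IH ns in auto)
      show False using count_contra[OF c o cn] .
    qed
  qed
qed

lemma LT:
  fixes V :: "'a set"
  assumes "inst V E w" "is_cycle E cs" "odd (weight w cs)" "conn E w cs V"
  shows "has_short V E w"
  using LT_aux assms by blast



theorem lemma2p5:
  fixes k :: nat and V :: "'a set" and E :: "'a set set" and \<omega> :: "'a set \<Rightarrow> nat" and cs :: "'a list"
  assumes "k \<ge> 8"
    and "simple_graph V E"
    and "good_weighting k V E \<omega>"
    and "is_cycle E cs"
    and "odd (weight \<omega> cs)"
    and "set cs \<noteq> V"
  shows "real (card (N1 E (set cs))) \<ge> (2 * real k + 1) / 3"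
proof -
  note sg = assms(2) and cyc = assms(4) and od = assms(5)
  have wts: "\<And>e. e \<in> E \<Longrightarrow> \<omega> e \<in> {3, 4, 5}" using assms(3) unfolding good_weighting_def by blast
  have nocyc: "\<And>cs'. is_cycle E cs' \<Longrightarrow> \<not> (odd (weight \<omega> cs') \<and> weight \<omega> cs' < 2 * k + 1)"
    using assms(3) unfolding good_weighting_def by blast
  obtain T where T: "spanning_tree V E T" "\<And>e. e \<in> T \<Longrightarrow> \<omega> e = 3"
    using assms(3) unfolding good_weighting_def by blast
  have TE: "T \<subseteq> E" and Tconn: "\<And>u v. u \<in> V \<Longrightarrow> v \<in> V \<Longrightarrow> (u, v) \<in> (edge_rel T)\<^sup>*"
    using T(1) unfolding spanning_tree_def by auto
  define X where "X = N1 E (set cs)"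
  define XE where "XE = {e \<in> E. e \<subseteq> X}"
  have csV: "set cs \<subseteq> V" using cycle_set_V[OF sg cyc] .
  have csX: "set cs \<subseteq> X" unfolding X_def N1_def by blast
  have nbX: "v \<in> X" if "u \<in> set cs" "{u, v} \<in> E" for u v
    unfolding X_def N1_def using that by blast
  have XV: "X \<subseteq> V"
  proof
    fix x assume "x \<in> X"
    then have "x \<in> set cs \<or> (\<exists>u\<in>set cs. {u, x} \<in> E)" unfolding X_def N1_def by blast
    then show "x \<in> V"
    proof
      assume "x \<in> set cs" then show ?thesis using csV by blast
    next
      assume "\<exists>u\<in>set cs. {u, x} \<in> E"
      then show ?thesis using sg_edge_in[OF sg] by blast
    qed
  qed
  have finV: "finite V" using sg unfolding simple_graph_def by simp
  have finX: "finite X" using finite_subset[OF XV finV] .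
  have inst: "inst X XE \<omega>" unfolding inst_def simple_graph_def
  proof (intro conjI ballI)
    show "finite X" using finX .
  next
    fix e assume e: "e \<in> XE"
    then have eE: "e \<in> E" and eX: "e \<subseteq> X" unfolding XE_def by auto
    obtain u v where uv: "e = {u, v}" "u \<noteq> v" using sg_edge[OF sg eE] by blast
    then show "\<exists>u v. e = {u, v} \<and> u \<noteq> v \<and> u \<in> X \<and> v \<in> X" using eX by blast
  next
    fix e assume "e \<in> XE"
    then show "\<omega> e \<in> {3, 4, 5}" using wts unfolding XE_def by blast
  qed
  have cycX: "is_cycle XE cs"
  proof -
    have "cycle_edges cs \<subseteq> E" using cyc unfolding is_cycle_def by simp
    moreover have "e \<subseteq> X" if "e \<in> cycle_edges cs" for e using cycle_edges_sub_set[OF that] csX by blast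
    ultimately have "cycle_edges cs \<subseteq> XE" unfolding XE_def by blast
    then show ?thesis using cyc unfolding is_cycle_def by simp
  qed
  obtain v0 where v0: "v0 \<in> V" "v0 \<notin> set cs" using csV assms(6) by blast
  have connX: "conn XE \<omega> cs X" unfolding conn_def
  proof
    fix x assume x: "x \<in> set cs"
    define R where "R = edge_rel (aedges XE \<omega>)"
    have xv0: "(x, v0) \<in> (edge_rel T)\<^sup>*" using Tconn[of x v0] x csV v0 by blast
    have inv: "(v \<in> set cs \<and> (x, v) \<in> R\<^sup>*) \<or> (\<exists>z\<in>X - set cs. (x, z) \<in> R\<^sup>*)"
      if "(x, v) \<in> (edge_rel T)\<^sup>*" for v
      using that
    proof (induction rule: rtrancl_induct)
      case base then show ?case using x by simp
    next
      case (step v v')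
      show ?case
      proof (cases "\<exists>z\<in>X - set cs. (x, z) \<in> R\<^sup>*")
        case True then show ?thesis by simp
      next
        case False
        then have vc: "v \<in> set cs" and xv: "(x, v) \<in> R\<^sup>*" using step.IH by auto
        have vT: "{v, v'} \<in> T" using step.hyps(2) unfolding edge_rel_iff .
        then have vE: "{v, v'} \<in> E" using TE by blast
        have v'X: "v' \<in> X" using nbX[OF vc vE] .
        have "{v, v'} \<subseteq> X" using v'X vc csX by blast
        then have "{v, v'} \<in> aedges XE \<omega>" unfolding aedges_iff XE_def using vE T(2)[OF vT] by simp
        then have "(v, v') \<in> R" unfolding R_def edge_rel_iff .
        then have xv': "(x, v') \<in> R\<^sup>*" using xv by simp
        show ?thesis
        proof (cases "v' \<in> set cs")
          case True then show ?thesis using xv' by simp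
        next
          case False then show ?thesis using xv' v'X by blast
        qed
      qed
    qed
    show "\<exists>z\<in>X - set cs. (x, z) \<in> (edge_rel (aedges XE \<omega>))\<^sup>*"
      using inv[OF xv0] v0(2) unfolding R_def by blast
  qed
  have "has_short X XE \<omega>" by (rule LT[OF inst cycX od connX])
  then obtain cs' where cs': "is_cycle XE cs'" "odd (weight \<omega> cs')" "weight \<omega> cs' \<le> 3 * card X"
    unfolding has_short_def by blast
  have "XE \<subseteq> E" unfolding XE_def by blast
  then have "is_cycle E cs'" using is_cycle_mono[OF cs'(1)] by blast
  then have "\<not> weight \<omega> cs' < 2 * k + 1" using nocyc cs'(2) by blast
  then have "2 * k + 1 \<le> 3 * card X" using cs'(3) by linarith
  then have "real (2 * k + 1) \<le> real (3 * card X)" by (simp only: of_nat_le_iff)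
  then have "2 * real k + 1 \<le> 3 * real (card X)" by simp
  then show ?thesis unfolding X_def by simp
qed


end
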